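(* Assume that $\kappa_{\mathcal H}(X_i,X_i)<\infty$ almost surely for every $i$; that for every $y\in\mathcal Y$ the map $u\mapsto\ell(y,u)$ is convex and three times differentiable, $u\mapsto\partial_2\ell(y,u)$ is $\beta_{\ell;2}$-Lipschitz continuous, and $\sup_u|\partial_2^3\ell(y,u)|\le\xi_\ell$; and that $u\mapsto s(y,u)$ is $\gamma$-Lipschitz continuous for every $y$. Then for every $y\in\mathcal Y$, $$|S_{\lambda;D^y}(X_i,Y_i)-\tilde S^{\mathrm{IF}}_{\lambda;D^y}(X_i,Y_i)|\le\tau^{(2)}_{\lambda;i}(y)\ (1\le i\le n),\qquad|S_{\lambda;D^y}(X_{n+1},y)-\tilde S^{\mathrm{IF}}_{\lambda;D^y}(X_{n+1},y)|\le\tau^{(2)}_{\lambda;n+1}(y),$$ where $\tau^{(2)}_{\lambda;i}(y)=\sqrt{K_{i,i}}\sqrt{K_{n+1,n+1}}\min\Big(\frac{\gamma\rho^{(2)}_\lambda(y)}{\lambda^3(n+1)^2},\frac{2\gamma\rho^{(1)}_\lambda(y)}{\lambda(n+1)}\Big)$.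
   Context: Let $\mathcal X\subset\mathbb R^d$, $\mathcal Y\subset\mathbb R$, $D=\{(X_1,Y_1),\dots,(X_n,Y_n)\}$ i.i.d., $(X_{n+1},Y_{n+1})$ independent with the same law; $D^{y'}=D\cup\{(X_{n+1},y')\}$. $\mathcal H$ is an RKHS with kernel $\kappa_{\mathcal H}$, $K_x=\kappa_{\mathcal H}(x,\cdot)$, $K=(\kappa_{\mathcal H}(X_i,X_j))_{1\le i,j\le n+1}$, $\mathcal A=\mathrm{span}\{K_{X_1},\dots,K_{X_{n+1}}\}$. For a loss $\ell$ and $\lambda>0$, $\hat f_{\lambda;D^{y'}}$ minimizes $\frac1{n+1}\sum_{(x,y'')\in D^{y'}}\ell(y'',f(x))+\lambda\|f\|_{\mathcal H}^2$. Fix $z\in\mathcal Y$. Let $H(f)=\frac1{n+1}\sum_{i=1}^n\partial_2^2\ell(Y_i,f(X_i))K_{X_i}\otimes K_{X_i}+\frac1{n+1}\partial_2^2\ell(z,f(X_{n+1}))K_{X_{n+1}}\otimes K_{X_{n+1}}+2\lambda\mathrm{Id}$ with $(g\otimes g)h=\langle g,h\rangle_{\mathcal H}g$ and $H(f)^+$ the inverse of its restriction to $\mathcal A$; $\mathbf I_{\hat f}(X_{n+1},z')=-\frac1{n+1}\partial_2\ell(z',\hat f_{\lambda;D^z}(X_{n+1}))H(\hat f_{\lambda;D^z})^+K_{X_{n+1}}$ and $\tilde f^{\mathrm{IF}}_{\lambda;D^y}=\hat f_{\lambda;D^z}-\mathbf I_{\hat f}(X_{n+1},z)+\mathbf I_{\hat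 f}(X_{n+1},y)$. For $s:\mathcal Y\times\mathcal Y\to\mathbb R_+$: $S_{\lambda;D^y}(X_i,Y_i)=s(Y_i,\hat f_{\lambda;D^y}(X_i))$, $S_{\lambda;D^y}(X_{n+1},y)=s(y,\hat f_{\lambda;D^y}(X_{n+1}))$, $\tilde S^{\mathrm{IF}}_{\lambda;D^y}(X_i,Y_i)=s(Y_i,\tilde f^{\mathrm{IF}}_{\lambda;D^y}(X_i))$ ($i\le n$), $\tilde S^{\mathrm{IF}}_{\lambda;D^y}(X_{n+1},y)=s(y,\tilde f^{\mathrm{IF}}_{\lambda;D^y}(X_{n+1}))$. Further $\rho^{(1)}_\lambda(y)=\frac12|\partial_2\ell(y,\hat f_{\lambda;D^z}(X_{n+1}))-\partial_2\ell(z,\hat f_{\lambda;D^z}(X_{n+1}))|$, $\tilde\rho^{(1)}_\lambda(y)=(1+K_{n+1,n+1}\frac{\beta_{\ell;2}}{\lambda(n+1)})\rho^{(1)}_\lambda(y)$ and $\rho^{(2)}_\lambda(y)=\frac{\xi_\ell}2\sqrt{K_{n+1,n+1}}(\frac1{n+1}\sum_{i=1}^{n+1}K_{i,i}^{3/2})(\tilde\rho^{(1)}_\lambda(y))^2+2\lambda K_{n+1,n+1}\beta_{\ell;2}\tilde\rho^{(1)}_\lambda(y)$. *)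

theory Defs
  imports "HOL-Analysis.Analysis"
begin

text \<open>RKHS model: the RKHS is a real Hilbert space 'h together with the canonical
 feature map Kx x = kappa(x, .); a function f in 'h is evaluated at x by the reproducing
 property f(x) = inner f (Kx x). Data points are indexed 1..n, the test point is n+1.\<close>

definition eval_at :: "('x \<Rightarrow> 'h::real_inner) \<Rightarrow> 'h \<Rightarrow> 'x \<Rightarrow> real" where
  "eval_at Kx f x = inner f (Kx x)"

definition kmat :: "('x \<Rightarrow> 'h::real_inner) \<Rightarrow> (nat \<Rightarrow> 'x) \<Rightarrow> nat \<Rightarrow> nat \<Rightarrow> real" where
  "kmat Kx X i j = inner (Kx (X i)) (Kx (X j))"

text \<open>Regularised empirical risk on D^{y'} = D \<union> {(X_{n+1}, y')}.\<close>
definition krr_obj ::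
  "('x \<Rightarrow> 'h::real_inner) \<Rightarrow> (real \<Rightarrow> real \<Rightarrow> real) \<Rightarrow> real \<Rightarrow> nat \<Rightarrow> (nat \<Rightarrow> 'x)
   \<Rightarrow> (nat \<Rightarrow> real) \<Rightarrow> real \<Rightarrow> 'h \<Rightarrow> real" where
  "krr_obj Kx loss lam n X Y y' f =
     (1 / real (n + 1)) * ((\<Sum>i = 1..n. loss (Y i) (eval_at Kx f (X i)))
                          + loss y' (eval_at Kx f (X (Suc n))))
     + lam * (norm f)\<^sup>2"

definition krr_min ::
  "('x \<Rightarrow> 'h::real_inner) \<Rightarrow> (real \<Rightarrow> real \<Rightarrow> real) \<Rightarrow> real \<Rightarrow> nat \<Rightarrow> (nat \<Rightarrow> 'x)
   \<Rightarrow> (nat \<Rightarrow> real) \<Rightarrow> real \<Rightarrow> 'h" where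
  "krr_min Kx loss lam n X Y y' =
     (SOME f. \<forall>g. krr_obj Kx loss lam n X Y y' f \<le> krr_obj Kx loss lam n X Y y' g)"

text \<open>The operator H(f) (with second derivative l2 of the loss, label z at X_{n+1}).\<close>
definition hess_op ::
  "('x \<Rightarrow> 'h::real_inner) \<Rightarrow> (real \<Rightarrow> real \<Rightarrow> real) \<Rightarrow> real \<Rightarrow> nat \<Rightarrow> (nat \<Rightarrow> 'x)
   \<Rightarrow> (nat \<Rightarrow> real) \<Rightarrow> real \<Rightarrow> 'h \<Rightarrow> 'h \<Rightarrow> 'h" where
  "hess_op Kx l2 lam n X Y z f h =
     (1 / real (n + 1)) *\<^sub>R
       ((\<Sum>i = 1..n. (l2 (Y i) (eval_at Kx f (X i)) * inner (Kx (X i)) h) *\<^sub>R Kx (X i))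
        + (l2 z (eval_at Kx f (X (Suc n))) * inner (Kx (X (Suc n))) h) *\<^sub>R Kx (X (Suc n)))
     + (2 * lam) *\<^sub>R h"

definition span_A :: "('x \<Rightarrow> 'h::real_inner) \<Rightarrow> nat \<Rightarrow> (nat \<Rightarrow> 'x) \<Rightarrow> 'h set" where
  "span_A Kx n X = span ((\<lambda>i. Kx (X i)) ` {1..Suc n})"

definition hess_pinv ::
  "('x \<Rightarrow> 'h::real_inner) \<Rightarrow> (real \<Rightarrow> real \<Rightarrow> real) \<Rightarrow> real \<Rightarrow> nat \<Rightarrow> (nat \<Rightarrow> 'x)
   \<Rightarrow> (nat \<Rightarrow> real) \<Rightarrow> real \<Rightarrow> 'h \<Rightarrow> 'h \<Rightarrow> 'h" where
  "hess_pinv Kx l2 lam n X Y z f g =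
     (THE a. a \<in> span_A Kx n X \<and> hess_op Kx l2 lam n X Y z f a = g)"

text \<open>Influence term I_{hat f}(X_{n+1}, z') (l1 = first derivative of the loss).\<close>
definition infl ::
  "('x \<Rightarrow> 'h::real_inner) \<Rightarrow> (real \<Rightarrow> real \<Rightarrow> real) \<Rightarrow> (real \<Rightarrow> real \<Rightarrow> real)
   \<Rightarrow> (real \<Rightarrow> real \<Rightarrow> real) \<Rightarrow> real \<Rightarrow> nat \<Rightarrow> (nat \<Rightarrow> 'x) \<Rightarrow> (nat \<Rightarrow> real) \<Rightarrow> real
   \<Rightarrow> real \<Rightarrow> 'h" where
  "infl Kx loss l1 l2 lam n X Y z z' =
     (let fz = krr_min Kx loss lam n X Y z in
      (- (1 / real (n + 1)) * l1 z' (eval_at Kx fz (X (Suc n))))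
        *\<^sub>R hess_pinv Kx l2 lam n X Y z fz (Kx (X (Suc n))))"

definition f_IF ::
  "('x \<Rightarrow> 'h::real_inner) \<Rightarrow> (real \<Rightarrow> real \<Rightarrow> real) \<Rightarrow> (real \<Rightarrow> real \<Rightarrow> real)
   \<Rightarrow> (real \<Rightarrow> real \<Rightarrow> real) \<Rightarrow> real \<Rightarrow> nat \<Rightarrow> (nat \<Rightarrow> 'x) \<Rightarrow> (nat \<Rightarrow> real) \<Rightarrow> real
   \<Rightarrow> real \<Rightarrow> 'h" where
  "f_IF Kx loss l1 l2 lam n X Y z y =
     krr_min Kx loss lam n X Y z - infl Kx loss l1 l2 lam n X Y z z + infl Kx loss l1 l2 lam n X Y z y"

definition rho1 ::
  "('x \<Rightarrow> 'h::real_inner) \<Rightarrow> (real \<Rightarrow> real \<Rightarrow> real) \<Rightarrow> (real \<Rightarrow> real \<Rightarrow> real)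
   \<Rightarrow> real \<Rightarrow> nat \<Rightarrow> (nat \<Rightarrow> 'x) \<Rightarrow> (nat \<Rightarrow> real) \<Rightarrow> real \<Rightarrow> real \<Rightarrow> real" where
  "rho1 Kx loss l1 lam n X Y z y =
     (let u = eval_at Kx (krr_min Kx loss lam n X Y z) (X (Suc n)) in
      (1 / 2) * \<bar>l1 y u - l1 z u\<bar>)"

definition rho1t ::
  "('x \<Rightarrow> 'h::real_inner) \<Rightarrow> (real \<Rightarrow> real \<Rightarrow> real) \<Rightarrow> (real \<Rightarrow> real \<Rightarrow> real)
   \<Rightarrow> real \<Rightarrow> real \<Rightarrow> nat \<Rightarrow> (nat \<Rightarrow> 'x) \<Rightarrow> (nat \<Rightarrow> real) \<Rightarrow> real \<Rightarrow> real \<Rightarrow> real" where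
  "rho1t Kx loss l1 \<beta> lam n X Y z y =
     (1 + kmat Kx X (Suc n) (Suc n) * \<beta> / (lam * real (n + 1))) * rho1 Kx loss l1 lam n X Y z y"

definition rho2 ::
  "('x \<Rightarrow> 'h::real_inner) \<Rightarrow> (real \<Rightarrow> real \<Rightarrow> real) \<Rightarrow> (real \<Rightarrow> real \<Rightarrow> real)
   \<Rightarrow> real \<Rightarrow> real \<Rightarrow> real \<Rightarrow> nat \<Rightarrow> (nat \<Rightarrow> 'x) \<Rightarrow> (nat \<Rightarrow> real) \<Rightarrow> real \<Rightarrow> real \<Rightarrow> real" where
  "rho2 Kx loss l1 \<beta> \<xi> lam n X Y z y =
     (let r = rho1t Kx loss l1 \<beta> lam n X Y z y; Knn = kmat Kx X (Suc n) (Suc n) in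
      (\<xi> / 2) * sqrt Knn * ((1 / real (n + 1)) * (\<Sum>i = 1..Suc n. kmat Kx X i i powr (3/2))) * r\<^sup>2
      + 2 * lam * Knn * \<beta> * r)"

definition tau2 ::
  "('x \<Rightarrow> 'h::real_inner) \<Rightarrow> (real \<Rightarrow> real \<Rightarrow> real) \<Rightarrow> (real \<Rightarrow> real \<Rightarrow> real)
   \<Rightarrow> real \<Rightarrow> real \<Rightarrow> real \<Rightarrow> real \<Rightarrow> nat \<Rightarrow> (nat \<Rightarrow> 'x) \<Rightarrow> (nat \<Rightarrow> real) \<Rightarrow> real
   \<Rightarrow> nat \<Rightarrow> real \<Rightarrow> real" where
  "tau2 Kx loss l1 \<beta> \<xi> \<gamma> lam n X Y z i y =
     sqrt (kmat Kx X i i) * sqrt (kmat Kx X (Suc n) (Suc n)) *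
     min (\<gamma> * rho2 Kx loss l1 \<beta> \<xi> lam n X Y z y / (lam ^ 3 * (real (n + 1))\<^sup>2))
         (2 * \<gamma> * rho1 Kx loss l1 lam n X Y z y / (lam * real (n + 1)))"

end

theory Submission
  imports Defs "HOL-Analysis.Analysis"
begin


lemma mono_deriv_nonneg:
  fixes f :: "real \<Rightarrow> real"
  assumes mono: "\<And>a b. a \<le> b \<Longrightarrow> f a \<le> f b" and d: "(f has_real_derivative d) (at x)"
  shows "0 \<le> d"
proof (rule ccontr)
  assume "\<not> 0 \<le> d"
  then have "d < 0" by simp
  from DERIV_neg_dec_right[OF d this] obtain e where e: "e > 0" "\<forall>h>0. h < e \<longrightarrow> f (x + h) < f x" by blast
  then have "f (x + e/2) < f x" by auto
  moreover have "f x \<le> f (x + e/2)" using mono e by simp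
  ultimately show False by simp
qed

lemma convex_deriv_mono:
  fixes f :: "real \<Rightarrow> real"
  assumes c: "convex_on UNIV f" and d: "\<And>u. (f has_real_derivative f' u) (at u)"
  shows "f x - f c \<ge> f' c * (x - c)"
  by (rule convex_on_imp_above_tangent[OF c]) (auto simp: d)

lemma convex_deriv_mono2:
  fixes f :: "real \<Rightarrow> real"
  assumes c: "convex_on UNIV f" and d: "\<And>u. (f has_real_derivative f' u) (at u)"
  shows "(f' a - f' b) * (a - b) \<ge> 0"
  using convex_deriv_mono[OF c d, of a b] convex_deriv_mono[OF c d, of b a]
  by (simp add: algebra_simps)

lemma convex_deriv_mono3:
  fixes f :: "real \<Rightarrow> real"
  assumes c: "convex_on UNIV f" and d: "\<And>u. (f has_real_derivative f' u) (at u)"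
    and ab: "a \<le> b"
  shows "f' a \<le> f' b"
proof (cases "a = b")
  case False
  with ab have "a < b" by simp
  with convex_deriv_mono2[OF c d, of b a] show ?thesis
    by (simp add: zero_le_mult_iff)
qed simp

lemma second_deriv_nonneg:
  fixes f :: "real \<Rightarrow> real"
  assumes c: "convex_on UNIV f" and d: "\<And>u. (f has_real_derivative f' u) (at u)"
    and d2: "\<And>u. (f' has_real_derivative f'' u) (at u)"
  shows "0 \<le> f'' x"
  by (rule mono_deriv_nonneg[OF _ d2]) (rule convex_deriv_mono3[OF c d])

lemma lip_deriv_le:
  fixes f :: "real \<Rightarrow> real"
  assumes l: "\<beta>-lipschitz_on UNIV f" and d: "(f has_real_derivative d) (at x)"
  shows "d \<le> \<beta>"
proof -
  have "0 \<le> \<beta> - d"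
  proof (rule mono_deriv_nonneg[of "\<lambda>t. \<beta> * t - f t"])
    fix a b :: real assume ab: "a \<le> b"
    have "dist (f b) (f a) \<le> \<beta> * dist b a" using lipschitz_onD[OF l] by simp
    then have "f b - f a \<le> \<beta> * (b - a)" using ab by (simp add: dist_real_def)
    then show "\<beta> * a - f a \<le> \<beta> * b - f b" by (simp add: algebra_simps)
  next
    show "((\<lambda>t. \<beta> * t - f t) has_real_derivative \<beta> - d) (at x)"
      by (auto intro!: derivative_eq_intros d)
  qed
  then show ?thesis by simp
qed

lemma taylor2:
  fixes f :: "real \<Rightarrow> real"
  assumes d1: "\<And>u. (f has_real_derivative f' u) (at u)"
    and d2: "\<And>u. (f' has_real_derivative f'' u) (at u)"
    and b: "\<And>u. \<bar>f'' u\<bar> \<le> \<xi>"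
  shows "\<bar>f x - f c - f' c * (x - c)\<bar> \<le> \<xi> / 2 * (x - c)\<^sup>2"
proof (cases "x = c")
  case True then show ?thesis by simp
next
  case False
  define diff where "diff = (\<lambda>m::nat. if m = 0 then f else if m = 1 then f' else f'')"
  have "\<exists>t. (if x < c then x < t \<and> t < c else c < t \<and> t < x) \<and>
    f x = (\<Sum>m<2. (diff m c / fact m) * (x - c)^m) + (diff 2 t / fact 2) * (x - c)^2"
    by (rule Taylor[of 2 diff f "min x c" "max x c"]) (use False in \<open>auto simp: diff_def d1 d2 less_2_cases_iff\<close>)
  then obtain t where t: "f x = (\<Sum>m<2. (diff m c / fact m) * (x - c)^m) + (diff 2 t / fact 2) * (x - c)^2"
    by blast
  then have "f x - f c - f' c * (x - c) = f'' t / 2 * (x - c)^2"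
    by (simp add: diff_def numeral_2_eq_2 lessThan_Suc)
  also have "\<bar>\<dots>\<bar> \<le> \<xi> / 2 * (x - c)^2"
    using b[of t] by (simp add: abs_mult mult_right_mono)
  finally show ?thesis .
qed



lemma norm_mid:
  fixes a b :: "'h::real_inner"
  shows "(norm ((1/2) *\<^sub>R (a + b)))\<^sup>2 = ((norm a)\<^sup>2 + (norm b)\<^sup>2)/2 - (norm (a - b))\<^sup>2 / 4"
  apply (simp add: power2_norm_eq_inner inner_add_left inner_add_right inner_diff_left inner_diff_right
      inner_commute algebra_simps)
  apply (simp add: field_simps)
  done

lemma lin_aux: "(m::real) \<le> zz \<Longrightarrow> zz \<le> (aa+bb)/2 - xx \<Longrightarrow> aa < m + a \<Longrightarrow> bb < m + b \<Longrightarrow> a \<le> c \<Longrightarrow> b \<le> c \<Longrightarrow> c < ee \<Longrightarrow> xx < ee"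
  by (simp add: field_simps)

lemma exists_min:
  fixes k :: "nat \<Rightarrow> 'h::{real_inner,complete_space}" and \<phi> \<phi>' :: "nat \<Rightarrow> real \<Rightarrow> real"
  assumes fin: "finite I" and lam: "lam > 0"
    and cvx: "\<forall>i\<in>I. convex_on UNIV (\<phi> i)"
    and der: "\<forall>i\<in>I. \<forall>t. (\<phi> i has_real_derivative \<phi>' i t) (at t)"
  shows "\<exists>f. \<forall>g. (\<Sum>i\<in>I. \<phi> i (inner f (k i))) + lam * (norm f)\<^sup>2
               \<le> (\<Sum>i\<in>I. \<phi> i (inner g (k i))) + lam * (norm g)\<^sup>2"
proof -
  define J where "J f = (\<Sum>i\<in>I. \<phi> i (inner f (k i))) + lam * (norm f)\<^sup>2" for f
  define M where "M = (\<Sum>i\<in>I. \<bar>\<phi>' i 0\<bar> * norm (k i))"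
  define C0 where "C0 = (\<Sum>i\<in>I. \<phi> i 0)"
  have lb: "J f \<ge> C0 - M\<^sup>2 / (4 * lam)" for f
  proof -
    have "\<phi> i (inner f (k i)) \<ge> \<phi> i 0 - \<bar>\<phi>' i 0\<bar> * norm (k i) * norm f" if i: "i \<in> I" for i
    proof -
      have "\<phi> i (inner f (k i)) - \<phi> i 0 \<ge> \<phi>' i 0 * (inner f (k i) - 0)"
        using convex_deriv_mono[of "\<phi> i" "\<phi>' i"] cvx der i by blast
      then have "\<phi> i (inner f (k i)) - \<phi> i 0 \<ge> \<phi>' i 0 * inner f (k i)" by simp
      moreover have "- \<bar>\<phi>' i 0 * inner f (k i)\<bar> \<le> \<phi>' i 0 * inner f (k i)" by linarith
      moreover have "\<bar>\<phi>' i 0 * inner f (k i)\<bar> \<le> \<bar>\<phi>' i 0\<bar> * norm (k i) * norm f"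
      proof -
        have "\<bar>\<phi>' i 0\<bar> * \<bar>inner f (k i)\<bar> \<le> \<bar>\<phi>' i 0\<bar> * (norm f * norm (k i))"
          using Cauchy_Schwarz_ineq2[of f "k i"] by (intro mult_left_mono) auto
        then show ?thesis by (simp add: abs_mult mult_ac)
      qed
      ultimately show ?thesis by linarith
    qed
    then have "(\<Sum>i\<in>I. \<phi> i (inner f (k i))) \<ge> (\<Sum>i\<in>I. \<phi> i 0 - \<bar>\<phi>' i 0\<bar> * norm (k i) * norm f)"
      by (rule sum_mono)
    also have "(\<Sum>i\<in>I. \<phi> i 0 - \<bar>\<phi>' i 0\<bar> * norm (k i) * norm f) = C0 - M * norm f"
      by (simp add: C0_def M_def sum_subtractf sum_distrib_right)
    finally have 1: "(\<Sum>i\<in>I. \<phi> i (inner f (k i))) \<ge> C0 - M * norm f" .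
    have "0 \<le> (2 * lam * norm f - M)\<^sup>2 / (4 * lam)" using lam by simp
    also have "(2 * lam * norm f - M)\<^sup>2 / (4 * lam) = lam * (norm f)\<^sup>2 - M * norm f + M\<^sup>2 / (4 * lam)"
      using lam by (simp add: field_simps power2_eq_square)
    finally show ?thesis using 1 unfolding J_def by linarith
  qed
  define m where "m = Inf (range J)"
  have bdd: "bdd_below (range J)" unfolding bdd_below_def using lb by blast
  have m_le: "m \<le> J g" for g unfolding m_def by (rule cInf_lower[OF _ bdd]) auto
  have "\<forall>j. \<exists>f. J f < m + 1 / real (Suc j)"
  proof
    fix j
    have "Inf (range J) < m + 1 / real (Suc j)" unfolding m_def by simp
    from cInf_lessD[OF _ this] show "\<exists>f. J f < m + 1 / real (Suc j)" by auto
  qed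
  then obtain F where F: "\<And>j. J (F j) < m + 1 / real (Suc j)" by metis
  have mid: "J ((1/2) *\<^sub>R (a + b)) \<le> (J a + J b) / 2 - lam / 4 * (norm (a - b))\<^sup>2" for a b
  proof -
    have "\<phi> i (inner ((1/2) *\<^sub>R (a + b)) (k i)) \<le> (\<phi> i (inner a (k i)) + \<phi> i (inner b (k i))) / 2"
      if i: "i \<in> I" for i
    proof -
      have "\<phi> i ((1 - 1/2) * inner a (k i) + (1/2) * inner b (k i))
          \<le> (1 - 1/2) * \<phi> i (inner a (k i)) + (1/2) * \<phi> i (inner b (k i))"
        using convex_onD[of UNIV "\<phi> i" "1/2" "inner a (k i)" "inner b (k i)"] cvx i by simp
      then show ?thesis by (simp add: inner_add_left algebra_simps)
    qed
    then have "(\<Sum>i\<in>I. \<phi> i (inner ((1/2) *\<^sub>R (a + b)) (k i)))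
        \<le> (\<Sum>i\<in>I. (\<phi> i (inner a (k i)) + \<phi> i (inner b (k i))) / 2)"
      by (rule sum_mono)
    also have "\<dots> = ((\<Sum>i\<in>I. \<phi> i (inner a (k i))) + (\<Sum>i\<in>I. \<phi> i (inner b (k i)))) / 2"
      by (simp add: sum.distrib flip: sum_divide_distrib)
    finally show ?thesis unfolding J_def norm_mid by (simp add: algebra_simps) (simp add: field_simps)
  qed
  have cau: "Cauchy F"
  proof (rule CauchyI)
    fix e :: real assume e: "e > 0"
    have "lam / 4 * e\<^sup>2 > 0" using lam e by simp
    from reals_Archimedean[OF this] obtain N where "inverse (real (Suc N)) < lam / 4 * e\<^sup>2" by blast
    then have N: "1 / real (Suc N) < lam / 4 * e\<^sup>2" by (simp add: inverse_eq_divide)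
    show "\<exists>M. \<forall>p\<ge>M. \<forall>q\<ge>M. norm (F p - F q) < e"
    proof (intro exI allI impI)
      fix p q assume p: "p \<ge> N" and q: "q \<ge> N"
      have "1 / real (Suc p) \<le> 1 / real (Suc N)" using p by (simp add: frac_le)
      moreover have "1 / real (Suc q) \<le> 1 / real (Suc N)" using q by (simp add: frac_le)
      moreover have "m \<le> J ((1/2) *\<^sub>R (F p + F q))" by (rule m_le)
      ultimately have "lam / 4 * (norm (F p - F q))\<^sup>2 < lam / 4 * e\<^sup>2"
        using lin_aux[OF _ mid[of "F p" "F q"] F[of p] F[of q] _ _ N] by blast
      then have "(norm (F p - F q))\<^sup>2 < e\<^sup>2" using lam by simp
      then show "norm (F p - F q) < e" using e by (simp add: power_less_imp_less_base)
    qed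
  qed
  then obtain f where lim: "F \<longlonglongrightarrow> f" using Cauchy_convergent convergent_def by blast
  have cont: "(\<lambda>j. J (F j)) \<longlonglongrightarrow> J f"
    unfolding J_def
  proof (intro tendsto_intros)
    fix i assume i: "i \<in> I"
    have "isCont (\<phi> i) (inner f (k i))"
      using der i by (auto intro: DERIV_isCont)
    then show "(\<lambda>j. \<phi> i (inner (F j) (k i))) \<longlonglongrightarrow> \<phi> i (inner f (k i))"
      by (rule isCont_tendsto_compose) (intro tendsto_intros lim)
  qed (rule lim)
  have "(\<lambda>j. J (F j)) \<longlonglongrightarrow> m"
  proof (rule tendsto_sandwich[of "\<lambda>j. m" _ _ "\<lambda>j. m + 1 / real (Suc j)"])
    show "\<forall>\<^sub>F j in sequentially. m \<le> J (F j)" using m_le by simp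
    show "\<forall>\<^sub>F j in sequentially. J (F j) \<le> m + 1 / real (Suc j)" using F by (simp add: less_imp_le)
    show "(\<lambda>j. m + 1 / real (Suc j)) \<longlonglongrightarrow> m"
      using tendsto_add[OF tendsto_const LIMSEQ_inverse_real_of_nat, of m] by (simp add: inverse_eq_divide)
  qed simp
  with cont have "J f = m" by (rule LIMSEQ_unique)
  then show ?thesis using m_le unfolding J_def by metis
qed

lemma min_grad:
  fixes k :: "nat \<Rightarrow> 'h::real_inner" and \<phi> \<phi>' :: "nat \<Rightarrow> real \<Rightarrow> real"
  assumes der: "\<forall>i\<in>I. \<forall>t. (\<phi> i has_real_derivative \<phi>' i t) (at t)"
    and min: "\<forall>g. (\<Sum>i\<in>I. \<phi> i (inner f (k i))) + lam * (norm f)\<^sup>2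
               \<le> (\<Sum>i\<in>I. \<phi> i (inner g (k i))) + lam * (norm g)\<^sup>2"
  shows "(\<Sum>i\<in>I. \<phi>' i (inner f (k i)) *\<^sub>R k i) + (2 * lam) *\<^sub>R f = 0"
proof -
  define v where "v = (\<Sum>i\<in>I. \<phi>' i (inner f (k i)) *\<^sub>R k i) + (2 * lam) *\<^sub>R f"
  define \<psi> where "\<psi> t = (\<Sum>i\<in>I. \<phi> i (inner f (k i) + t * inner v (k i)))
      + lam * (inner f f + 2 * t * inner f v + t\<^sup>2 * inner v v)" for t
  have \<psi>_eq: "\<psi> t = (\<Sum>i\<in>I. \<phi> i (inner (f + t *\<^sub>R v) (k i))) + lam * (norm (f + t *\<^sub>R v))\<^sup>2" for t
    unfolding \<psi>_def power2_norm_eq_inner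
    by (simp add: inner_add_left inner_add_right inner_commute algebra_simps power2_eq_square)
  have d1: "((\<lambda>t. \<phi> i (inner f (k i) + t * inner v (k i))) has_real_derivative
      \<phi>' i (inner f (k i)) * inner v (k i)) (at 0)" if i: "i \<in> I" for i
  proof -
    have g: "((\<lambda>t. inner f (k i) + t * inner v (k i)) has_real_derivative inner v (k i)) (at 0)"
      by (auto intro!: derivative_eq_intros)
    have h: "(\<phi> i has_real_derivative \<phi>' i (inner f (k i))) (at (inner f (k i) + 0 * inner v (k i)))"
      using der i by simp
    show ?thesis by (rule DERIV_chain2[OF h g])
  qed
  have d2: "((\<lambda>t. lam * (inner f f + 2 * t * inner f v + t\<^sup>2 * inner v v)) has_real_derivative
      lam * (2 * inner f v)) (at 0)"
    by (auto intro!: derivative_eq_intros)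
  have "(\<psi> has_real_derivative (\<Sum>i\<in>I. \<phi>' i (inner f (k i)) * inner v (k i)) + lam * (2 * inner f v)) (at 0)"
    unfolding \<psi>_def by (intro DERIV_add DERIV_sum d1 d2)
  moreover have "(\<Sum>i\<in>I. \<phi>' i (inner f (k i)) * inner v (k i)) + lam * (2 * inner f v) = inner v v"
  proof -
    have "inner v w = (\<Sum>i\<in>I. \<phi>' i (inner f (k i)) * inner (k i) w) + 2 * lam * inner f w" for w
      unfolding v_def by (simp add: inner_add_left inner_sum_left)
    from this[of v] show ?thesis by (simp add: inner_commute)
  qed
  ultimately have d: "(\<psi> has_real_derivative inner v v) (at 0)" by simp
  have "\<forall>y. \<bar>0 - y\<bar> < 1 \<longrightarrow> \<psi> 0 \<le> \<psi> y"
    using min unfolding \<psi>_eq by simp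
  from DERIV_local_min[OF d _ this] have "inner v v = 0" by simp
  then show ?thesis unfolding v_def by simp
qed



definition Hop :: "(nat \<Rightarrow> real) \<Rightarrow> (nat \<Rightarrow> 'h::real_inner) \<Rightarrow> nat set \<Rightarrow> real \<Rightarrow> 'h \<Rightarrow> 'h" where
  "Hop c k I lam h = (\<Sum>i\<in>I. (c i * inner (k i) h) *\<^sub>R k i) + (2 * lam) *\<^sub>R h"

lemma Hop_diff: "Hop c k I lam (a - b) = Hop c k I lam a - Hop c k I lam b"
  by (simp add: Hop_def inner_diff_right algebra_simps scaleR_left_diff_distrib sum_subtractf)

lemma Hop_scale: "Hop c k I lam (r *\<^sub>R a) = r *\<^sub>R Hop c k I lam a"
  by (simp add: Hop_def scaleR_sum_right scaleR_add_right mult_ac)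

lemma Hop_quad:
  assumes "\<forall>i\<in>I. c i \<ge> 0"
  shows "inner (Hop c k I lam h) h \<ge> 2 * lam * (norm h)\<^sup>2"
proof -
  have "inner (Hop c k I lam h) h = (\<Sum>i\<in>I. c i * (inner (k i) h)\<^sup>2) + 2 * lam * inner h h"
    by (simp add: Hop_def inner_add_left inner_sum_left power2_eq_square mult.assoc)
  then have "inner (Hop c k I lam h) h = (\<Sum>i\<in>I. c i * (inner (k i) h)\<^sup>2) + 2 * lam * (norm h)\<^sup>2"
    by (simp add: power2_norm_eq_inner)
  moreover have "(\<Sum>i\<in>I. c i * (inner (k i) h)\<^sup>2) \<ge> 0"
    using assms by (intro sum_nonneg) auto
  ultimately show ?thesis by simp
qed

lemma coerc_bound:
  fixes d r :: "'h::real_inner"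
  assumes "2 * lam * (norm d)\<^sup>2 \<le> inner r d" "lam > 0"
  shows "norm d \<le> norm r / (2 * lam)"
proof (cases "d = 0")
  case False
  have "2 * lam * (norm d)\<^sup>2 \<le> norm r * norm d"
    using assms(1) norm_cauchy_schwarz[of r d] by linarith
  then have "2 * lam * norm d \<le> norm r" using False by (simp add: power2_eq_square)
  then show ?thesis using assms(2) by (simp add: field_simps)
qed (use assms in simp)

lemma obj_eq:
  "krr_obj Kx loss lam n X Y w f =
   (\<Sum>i\<in>{1..Suc n}. (1 / real (Suc n)) * loss ((Y(Suc n := w)) i) (inner f (Kx (X i)))) + lam * (norm f)\<^sup>2"
proof -
  have "(\<Sum>i = 1..n. loss (Y i) (eval_at Kx f (X i))) = (\<Sum>i = 1..n. loss ((Y(Suc n := w)) i) (inner f (Kx (X i))))"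
    by (intro sum.cong) (auto simp: eval_at_def)
  then show ?thesis
    by (simp add: krr_obj_def eval_at_def sum_distrib_left distrib_left)
qed

lemma krr_grad:
  fixes Kx :: "'x \<Rightarrow> 'h::{real_inner,complete_space}"
  assumes lam: "lam > 0"
    and cvx: "\<forall>i\<in>{1..Suc n}. convex_on UNIV (loss ((Y(Suc n := w)) i))"
    and der: "\<forall>i\<in>{1..Suc n}. \<forall>t. (loss ((Y(Suc n := w)) i) has_real_derivative l1 ((Y(Suc n := w)) i) t) (at t)"
  shows "(\<Sum>i\<in>{1..Suc n}. ((1 / real (Suc n)) * l1 ((Y(Suc n := w)) i) (inner (krr_min Kx loss lam n X Y w) (Kx (X i))))
            *\<^sub>R Kx (X i)) + (2 * lam) *\<^sub>R krr_min Kx loss lam n X Y w = 0"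
proof -
  define \<phi> where "\<phi> i t = (1 / real (Suc n)) * loss ((Y(Suc n := w)) i) t" for i t
  define \<phi>' where "\<phi>' i t = (1 / real (Suc n)) * l1 ((Y(Suc n := w)) i) t" for i t
  have cvx': "\<forall>i\<in>{1..Suc n}. convex_on UNIV (\<phi> i)"
    unfolding \<phi>_def apply (intro ballI convex_on_cmul) using cvx by auto
  have der': "\<forall>i\<in>{1..Suc n}. \<forall>t. (\<phi> i has_real_derivative \<phi>' i t) (at t)"
    unfolding \<phi>_def \<phi>'_def apply (intro ballI allI DERIV_cmult) using der by auto
  have ex: "\<exists>f. \<forall>g. krr_obj Kx loss lam n X Y w f \<le> krr_obj Kx loss lam n X Y w g"
    using exists_min[OF _ lam cvx' der', of "\<lambda>i. Kx (X i)"] unfolding obj_eq \<phi>_def by simp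
  have "\<forall>g. krr_obj Kx loss lam n X Y w (krr_min Kx loss lam n X Y w) \<le> krr_obj Kx loss lam n X Y w g"
    unfolding krr_min_def by (rule someI_ex[OF ex])
  then have "\<forall>g. (\<Sum>i\<in>{1..Suc n}. \<phi> i (inner (krr_min Kx loss lam n X Y w) (Kx (X i)))) + lam * (norm (krr_min Kx loss lam n X Y w))\<^sup>2
     \<le> (\<Sum>i\<in>{1..Suc n}. \<phi> i (inner g (Kx (X i)))) + lam * (norm g)\<^sup>2"
    unfolding obj_eq \<phi>_def by simp
  from min_grad[OF der' this] show ?thesis unfolding \<phi>'_def .
qed

lemma hess_eq:
  "hess_op Kx l2 lam n X Y z f h =
   Hop (\<lambda>i. (1 / real (Suc n)) * l2 ((Y(Suc n := z)) i) (inner f (Kx (X i)))) (\<lambda>i. Kx (X i)) {1..Suc n} lam h"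
proof -
  have "(\<Sum>i = 1..n. (l2 (Y i) (eval_at Kx f (X i)) * inner (Kx (X i)) h) *\<^sub>R Kx (X i))
      = (\<Sum>i = 1..n. (l2 ((Y(Suc n := z)) i) (inner f (Kx (X i))) * inner (Kx (X i)) h) *\<^sub>R Kx (X i))"
    by (intro sum.cong) (auto simp: eval_at_def)
  then show ?thesis
    by (simp add: hess_op_def Hop_def eval_at_def scaleR_sum_right scaleR_add_right)
qed

lemma pinv:
  fixes Kx :: "'x \<Rightarrow> 'h::{real_inner,complete_space}"
  assumes lam: "lam > 0"
    and c: "\<forall>i\<in>{1..Suc n}. l2 ((Y(Suc n := z)) i) (inner g (Kx (X i))) \<ge> 0"
  shows "hess_op Kx l2 lam n X Y z g (hess_pinv Kx l2 lam n X Y z g (Kx (X (Suc n)))) = Kx (X (Suc n))"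
proof -
  define c where "c i = (1 / real (Suc n)) * l2 ((Y(Suc n := z)) i) (inner g (Kx (X i)))" for i
  define k where "k i = Kx (X i)" for i
  define H where "H = Hop c k {1..Suc n} lam"
  have Heq: "hess_op Kx l2 lam n X Y z g = H"
    unfolding H_def c_def k_def by (rule ext) (rule hess_eq)
  have c0: "\<forall>i\<in>{1..Suc n}. c i \<ge> 0" using c by (simp add: c_def)
  define \<phi> where "\<phi> i t = c i / 2 * t\<^sup>2 - (if i = Suc n then t else 0)" for i t
  define \<phi>' where "\<phi>' i t = c i * t - (if i = Suc n then 1 else 0)" for i t
  have der: "\<forall>i\<in>{1..Suc n}. \<forall>t. (\<phi> i has_real_derivative \<phi>' i t) (at t)"
    unfolding \<phi>_def \<phi>'_def by (auto intro!: derivative_eq_intros)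
  have cvx: "\<forall>i\<in>{1..Suc n}. convex_on UNIV (\<phi> i)"
  proof
    fix i assume i: "i \<in> {1..Suc n}"
    show "convex_on UNIV (\<phi> i)"
    proof (rule convex_on_realI[where f' = "\<phi>' i"])
      show "\<And>x. x \<in> UNIV \<Longrightarrow> (\<phi> i has_real_derivative \<phi>' i x) (at x)" using der i by blast
      show "\<And>x y. x \<in> UNIV \<Longrightarrow> y \<in> UNIV \<Longrightarrow> x \<le> y \<Longrightarrow> \<phi>' i x \<le> \<phi>' i y"
        using c0 i by (auto simp: \<phi>'_def intro: mult_left_mono)
    qed simp
  qed
  obtain a where amin: "\<forall>b. (\<Sum>i\<in>{1..Suc n}. \<phi> i (inner a (k i))) + lam * (norm a)\<^sup>2
               \<le> (\<Sum>i\<in>{1..Suc n}. \<phi> i (inner b (k i))) + lam * (norm b)\<^sup>2"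
    using exists_min[OF _ lam cvx der, of k] by auto
  have g0: "(\<Sum>i\<in>{1..Suc n}. \<phi>' i (inner a (k i)) *\<^sub>R k i) + (2 * lam) *\<^sub>R a = 0"
    by (rule min_grad[OF der amin])
  have split: "(\<Sum>i\<in>{1..Suc n}. \<phi>' i (inner a (k i)) *\<^sub>R k i)
      = (\<Sum>i\<in>{1..Suc n}. (c i * inner (k i) a) *\<^sub>R k i) - k (Suc n)"
  proof -
    have "(\<Sum>i\<in>{1..Suc n}. \<phi>' i (inner a (k i)) *\<^sub>R k i)
        = (\<Sum>i\<in>{1..Suc n}. (c i * inner (k i) a) *\<^sub>R k i - (if i = Suc n then k i else 0))"
      by (intro sum.cong) (auto simp: \<phi>'_def inner_commute scaleR_left_diff_distrib)
    also have "\<dots> = (\<Sum>i\<in>{1..Suc n}. (c i * inner (k i) a) *\<^sub>R k i) - k (Suc n)"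
      by (simp add: sum_subtractf)
    finally show ?thesis .
  qed
  have Ha: "H a = k (Suc n)"
    using g0 unfolding split H_def Hop_def by (simp add: algebra_simps)
  have aA: "a \<in> span_A Kx n X"
  proof -
    have eq: "(2 * lam) *\<^sub>R a = k (Suc n) - (\<Sum>i\<in>{1..Suc n}. (c i * inner (k i) a) *\<^sub>R k i)"
      using g0 unfolding split by (simp add: algebra_simps)
    have "a = (1 / (2 * lam)) *\<^sub>R ((2 * lam) *\<^sub>R a)" using lam by simp
    also have "\<dots> = (1 / (2 * lam)) *\<^sub>R (k (Suc n) - (\<Sum>i\<in>{1..Suc n}. (c i * inner (k i) a) *\<^sub>R k i))"
      by (simp only: eq)
    also have "\<dots> \<in> span_A Kx n X"
      unfolding span_A_def k_def
      by (intro span_scale span_diff span_sum span_base) auto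
    finally show ?thesis .
  qed
  have uniq: "b = a" if "b \<in> span_A Kx n X" "H b = k (Suc n)" for b
  proof -
    have "H (b - a) = H b - H a" unfolding H_def by (rule Hop_diff)
    then have "H (b - a) = 0" using that(2) Ha by simp
    moreover have "inner (H (b - a)) (b - a) \<ge> 2 * lam * (norm (b - a))\<^sup>2"
      unfolding H_def by (rule Hop_quad[OF c0])
    ultimately have "2 * lam * (norm (b - a))\<^sup>2 \<le> 0" by simp
    then show ?thesis using lam by (simp add: mult_le_0_iff)
  qed
  have "hess_pinv Kx l2 lam n X Y z g (Kx (X (Suc n))) = a"
    unfolding hess_pinv_def Heq
  proof (rule the_equality)
    show "a \<in> span_A Kx n X \<and> H a = Kx (X (Suc n))" using aA Ha by (simp add: k_def)
    show "\<And>b. b \<in> span_A Kx n X \<and> H b = Kx (X (Suc n)) \<Longrightarrow> b = a"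
      using uniq by (simp add: k_def)
  qed
  then show ?thesis using Heq Ha k_def by simp
qed



lemma pow32: "0 \<le> (x::real) \<Longrightarrow> (x\<^sup>2) powr (3/2) = x ^ 3"
proof (cases "x = 0")
  case False
  assume x: "0 \<le> x"
  with False have "x > 0" by simp
  have "(x\<^sup>2) powr (3/2) = (x powr 2) powr (3/2)" using \<open>x > 0\<close> by (simp add: powr_realpow)
  also have "\<dots> = x powr 3" by (simp add: powr_powr)
  also have "\<dots> = x ^ 3" using \<open>x > 0\<close> by (simp add: powr_realpow)
  finally show ?thesis .
qed simp

lemma quad_bound:
  assumes "2 * lam * x\<^sup>2 \<le> C * x" "lam > 0" "(x::real) \<ge> 0" "C \<ge> 0"
  shows "x \<le> C / (2 * lam)"
proof (cases "x = 0")
  case True then show ?thesis using assms by simp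
next
  case False
  then have "2 * lam * x \<le> C" using assms by (simp add: power2_eq_square)
  then show ?thesis using assms by (simp add: field_simps)
qed

lemma arith_eq1: fixes lam N Q r1 \<xi> \<beta> S3 :: real assumes "lam > 0" "N > 0"
  shows "((1 / N) * (\<xi> / 2 * (r1 * Q / (lam * N))\<^sup>2 * S3 + \<beta> * Q\<^sup>2 * (r1 * Q / (lam * N)))) / (2 * lam)
   = (\<xi> * S3 * Q\<^sup>2 / (4 * lam ^ 3 * N ^ 3)) * r1\<^sup>2 + (\<beta> * Q ^ 3 / (2 * lam\<^sup>2 * N\<^sup>2)) * r1"
  using assms by (simp add: field_simps power2_eq_square power3_eq_cube)
lemma arith_eq2: fixes lam N Q r1 \<xi> \<beta> S3 rt :: real assumes "lam > 0" "N > 0"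
  shows "Q * (\<xi> / 2 * Q * ((1 / N) * S3) * rt\<^sup>2 + 2 * lam * Q\<^sup>2 * \<beta> * rt) / (lam ^ 3 * N\<^sup>2) =
    2 * (\<xi> * S3 * Q\<^sup>2 / (4 * lam ^ 3 * N ^ 3)) * rt\<^sup>2 + 4 * (\<beta> * Q ^ 3 / (2 * lam\<^sup>2 * N\<^sup>2)) * rt"
  using assms by (simp add: field_simps power2_eq_square power3_eq_cube)

theorem theorem21:
  fixes Kx :: "real^'d \<Rightarrow> 'h::{real_inner, complete_space}"
    and \<X> :: "(real^'d) set" and \<Y> :: "real set"
    and X :: "nat \<Rightarrow> real^'d" and Y :: "nat \<Rightarrow> real"
    and n :: nat and lam :: real and z :: real
    and loss l1 l2 l3 :: "real \<Rightarrow> real \<Rightarrow> real"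
    and s :: "real \<Rightarrow> real \<Rightarrow> real"
    and \<beta> \<xi> \<gamma> :: real
  assumes rkhs: "closure (span (range Kx)) = UNIV"
    and X_in: "\<forall>i \<in> {1..Suc n}. X i \<in> \<X>"
    and Y_in: "\<forall>i \<in> {1..n}. Y i \<in> \<Y>"
    and z_in: "z \<in> \<Y>"
    and lam_pos: "lam > 0"
    and convex: "\<forall>y \<in> \<Y>. convex_on UNIV (loss y)"
    and d1: "\<forall>y \<in> \<Y>. \<forall>u. (loss y has_real_derivative l1 y u) (at u)"
    and d2: "\<forall>y \<in> \<Y>. \<forall>u. (l1 y has_real_derivative l2 y u) (at u)"
    and d3: "\<forall>y \<in> \<Y>. \<forall>u. (l2 y has_real_derivative l3 y u) (at u)"
    and lip_l1: "\<forall>y \<in> \<Y>. \<beta>-lipschitz_on UNIV (l1 y)"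
    and bnd_l3: "\<forall>y \<in> \<Y>. \<forall>u. \<bar>l3 y u\<bar> \<le> \<xi>"
    and s_nonneg: "\<forall>y u. s y u \<ge> 0"
    and lip_s: "\<forall>y \<in> \<Y>. \<gamma>-lipschitz_on UNIV (s y)"
    and y_in: "y \<in> \<Y>"
  shows "(\<forall>i \<in> {1..n}.
            \<bar>s (Y i) (eval_at Kx (krr_min Kx loss lam n X Y y) (X i))
             - s (Y i) (eval_at Kx (f_IF Kx loss l1 l2 lam n X Y z y) (X i))\<bar>
            \<le> tau2 Kx loss l1 \<beta> \<xi> \<gamma> lam n X Y z i y)
       \<and> \<bar>s y (eval_at Kx (krr_min Kx loss lam n X Y y) (X (Suc n)))
            - s y (eval_at Kx (f_IF Kx loss l1 l2 lam n X Y z y) (X (Suc n)))\<bar>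
         \<le> tau2 Kx loss l1 \<beta> \<xi> \<gamma> lam n X Y z (Suc n) y"
proof -
  define N where "N = real (Suc n)"
  have N0: "N > 0" unfolding N_def by simp
  define I where "I = {1..Suc n}"
  have finI: "finite I" unfolding I_def by simp
  have NI: "Suc n \<in> I" unfolding I_def by simp
  define k where "k i = Kx (X i)" for i
  define Yy where "Yy = Y(Suc n := y)"
  define Yz where "Yz = Y(Suc n := z)"
  have Yy_in: "\<forall>i\<in>I. Yy i \<in> \<Y>" using Y_in y_in by (auto simp: Yy_def I_def)
  have Yz_in: "\<forall>i\<in>I. Yz i \<in> \<Y>" using Y_in z_in by (auto simp: Yz_def I_def)
  have YyI: "Yy i = Y i" "Yz i = Y i" if "i \<in> {1..n}" for i using that by (auto simp: Yy_def Yz_def)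
  have Yy_N: "Yy (Suc n) = y" and Yz_N: "Yz (Suc n) = z" by (auto simp: Yy_def Yz_def)
  have \<beta>0: "\<beta> \<ge> 0" using lip_l1 y_in lipschitz_on_nonneg by blast
  have \<gamma>0: "\<gamma> \<ge> 0" using lip_s y_in lipschitz_on_nonneg by blast
  have \<xi>0: "\<xi> \<ge> 0" using bnd_l3 y_in by (meson abs_ge_zero order_trans)
  have l2_nn: "0 \<le> l2 w t" if "w \<in> \<Y>" for w t
    using second_deriv_nonneg[of "loss w" "l1 w" "l2 w" t] convex d1 d2 that by blast
  have l2_le: "l2 w t \<le> \<beta>" if "w \<in> \<Y>" for w t
    using lip_deriv_le[of \<beta> "l1 w" "l2 w t" t] lip_l1 d2 that by blast
  have l1_mono: "(l1 w a - l1 w b) * (a - b) \<ge> 0" if "w \<in> \<Y>" for w a b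
    using convex_deriv_mono2[of "loss w" "l1 w" a b] convex d1 that by blast
  have tay: "\<bar>l1 w a - l1 w b - l2 w b * (a - b)\<bar> \<le> \<xi> / 2 * (a - b)\<^sup>2" if "w \<in> \<Y>" for w a b
    using taylor2[of "l1 w" "l2 w" "l3 w" \<xi> a b] d2 d3 bnd_l3 that by blast
  define f where "f = krr_min Kx loss lam n X Y y"
  define g where "g = krr_min Kx loss lam n X Y z"
  have gf: "(\<Sum>i\<in>I. ((1 / N) * l1 (Yy i) (inner f (k i))) *\<^sub>R k i) + (2 * lam) *\<^sub>R f = 0"
    unfolding f_def I_def N_def k_def Yy_def
    by (rule krr_grad[OF lam_pos]) (use convex d1 Yy_in in \<open>auto simp: I_def Yy_def\<close>)
  have gg: "(\<Sum>i\<in>I. ((1 / N) * l1 (Yz i) (inner g (k i))) *\<^sub>R k i) + (2 * lam) *\<^sub>R g = 0"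
    unfolding g_def I_def N_def k_def Yz_def
    by (rule krr_grad[OF lam_pos]) (use convex d1 Yz_in in \<open>auto simp: I_def Yz_def\<close>)
  define c where "c i = (1 / N) * l2 (Yz i) (inner g (k i))" for i
  have c0: "\<forall>i\<in>I. c i \<ge> 0" using l2_nn Yz_in N0 by (simp add: c_def)
  define H where "H = Hop c k I lam"
  have Heq: "hess_op Kx l2 lam n X Y z g = H"
    unfolding H_def c_def k_def I_def N_def Yz_def by (rule ext) (rule hess_eq)
  define p where "p = hess_pinv Kx l2 lam n X Y z g (k (Suc n))"
  have Hp: "H p = k (Suc n)"
    unfolding p_def k_def Heq[symmetric]
    by (rule pinv[OF lam_pos]) (use l2_nn Yz_in in \<open>auto simp: I_def Yz_def\<close>)
  define q where "q i = norm (k i)" for i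
  have Kq: "kmat Kx X i i = (q i)\<^sup>2" for i by (simp add: kmat_def q_def k_def power2_norm_eq_inner)
  have sqK: "sqrt (kmat Kx X i i) = q i" for i by (simp add: Kq q_def)
  define u where "u = inner g (k (Suc n))"
  define r1 where "r1 = rho1 Kx loss l1 lam n X Y z y"
  have r1_eq: "r1 = (1/2) * \<bar>l1 y u - l1 z u\<bar>"
    by (simp add: r1_def rho1_def u_def g_def eval_at_def k_def Let_def)
  have r1_0: "r1 \<ge> 0" by (simp add: r1_eq)
  define \<Delta> where "\<Delta> = f - g"
  define Di where "Di i = inner (k i) \<Delta>" for i
  have Di_eq: "Di i = inner f (k i) - inner g (k i)" for i
    by (simp add: Di_def \<Delta>_def inner_diff_right inner_commute)
  have Di_le: "\<bar>Di i\<bar> \<le> q i * norm \<Delta>" for i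
    unfolding Di_def q_def by (rule Cauchy_Schwarz_ineq2)
  define \<phi>f where "\<phi>f i = (1 / N) * l1 (Yy i) (inner f (k i))" for i
  define \<phi>g where "\<phi>g i = (1 / N) * l1 (Yz i) (inner g (k i))" for i
  have diffeq: "(\<Sum>i\<in>I. (\<phi>f i - \<phi>g i) *\<^sub>R k i) + (2 * lam) *\<^sub>R \<Delta> = 0"
  proof -
    have "((\<Sum>i\<in>I. \<phi>f i *\<^sub>R k i) + (2 * lam) *\<^sub>R f) - ((\<Sum>i\<in>I. \<phi>g i *\<^sub>R k i) + (2 * lam) *\<^sub>R g) = 0"
      using gf gg by (simp add: \<phi>f_def \<phi>g_def)
    then show ?thesis
      by (simp add: \<Delta>_def algebra_simps sum_subtractf scaleR_left_diff_distrib)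
  qed
  have innereq: "(\<Sum>i\<in>I. (\<phi>f i - \<phi>g i) * Di i) + 2 * lam * (norm \<Delta>)\<^sup>2 = 0"
  proof -
    have "inner ((\<Sum>i\<in>I. (\<phi>f i - \<phi>g i) *\<^sub>R k i) + (2 * lam) *\<^sub>R \<Delta>) \<Delta> = 0" using diffeq by simp
    then show ?thesis by (simp add: inner_add_left inner_sum_left Di_def power2_norm_eq_inner)
  qed
  have lowsum: "(\<Sum>i\<in>I. (\<phi>f i - \<phi>g i) * Di i) \<ge> - ((1 / N) * (2 * r1) * \<bar>Di (Suc n)\<bar>)"
  proof -
    have A: "(\<Sum>i\<in>{1..n}. (\<phi>f i - \<phi>g i) * Di i) \<ge> 0"
    proof (rule sum_nonneg)
      fix i assume i: "i \<in> {1..n}"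
      have "(\<phi>f i - \<phi>g i) * Di i = (1 / N) * ((l1 (Y i) (inner f (k i)) - l1 (Y i) (inner g (k i))) * Di i)"
        unfolding \<phi>f_def \<phi>g_def YyI[OF i] by (simp only: right_diff_distrib[symmetric] mult.assoc)
      also have "\<dots> \<ge> 0" using l1_mono Y_in i N0 unfolding Di_eq by simp
      finally show "(\<phi>f i - \<phi>g i) * Di i \<ge> 0" .
    qed
    define fx where "fx = inner f (k (Suc n))"
    have m1: "(\<phi>f (Suc n) - \<phi>g (Suc n)) * Di (Suc n)
       = (1 / N) * ((l1 y fx - l1 y u) * (fx - u) + (l1 y u - l1 z u) * (fx - u))"
      by (simp add: \<phi>f_def \<phi>g_def Yy_N Yz_N Di_eq fx_def u_def algebra_simps)
    have m2: "(l1 y fx - l1 y u) * (fx - u) \<ge> 0" using l1_mono y_in by simp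
    have m3: "(l1 y u - l1 z u) * (fx - u) \<ge> - (2 * r1 * \<bar>Di (Suc n)\<bar>)"
    proof -
      have "\<bar>(l1 y u - l1 z u) * (fx - u)\<bar> = 2 * r1 * \<bar>Di (Suc n)\<bar>"
        by (simp add: r1_eq abs_mult Di_eq fx_def u_def)
      then show ?thesis by linarith
    qed
    have B: "(\<phi>f (Suc n) - \<phi>g (Suc n)) * Di (Suc n) \<ge> - ((1 / N) * (2 * r1) * \<bar>Di (Suc n)\<bar>)"
    proof -
      have "(1 / N) * ((l1 y fx - l1 y u) * (fx - u) + (l1 y u - l1 z u) * (fx - u)) \<ge> (1 / N) * (- (2 * r1 * \<bar>Di (Suc n)\<bar>))"
        using m2 m3 N0 by (intro mult_left_mono) auto
      then show ?thesis using m1 by simp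
    qed
    show ?thesis using A B unfolding I_def by simp
  qed
  have stab: "norm \<Delta> \<le> r1 * q (Suc n) / (lam * N)"
  proof -
    have "2 * lam * (norm \<Delta>)\<^sup>2 \<le> (1 / N) * (2 * r1) * \<bar>Di (Suc n)\<bar>" using innereq lowsum by linarith
    also have "\<dots> \<le> (1 / N) * (2 * r1) * (q (Suc n) * norm \<Delta>)"
      using Di_le N0 r1_0 by (intro mult_left_mono) auto
    finally have "2 * lam * (norm \<Delta>)\<^sup>2 \<le> ((1 / N) * (2 * r1) * q (Suc n)) * norm \<Delta>" by (simp add: mult_ac)
    from quad_bound[OF this lam_pos] have "norm \<Delta> \<le> (1 / N) * (2 * r1) * q (Suc n) / (2 * lam)"
      using N0 r1_0 by (simp add: q_def)
    then show ?thesis by (simp add: field_simps)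
  qed
  have Hquad: "inner (H h) h \<ge> 2 * lam * (norm h)\<^sup>2" for h
    unfolding H_def by (rule Hop_quad[OF c0])
  have pnorm: "norm p \<le> q (Suc n) / (2 * lam)"
    using coerc_bound[OF _ lam_pos, of p "H p"] Hquad[of p] by (simp add: Hp q_def)
  define \<delta> where "\<delta> = infl Kx loss l1 l2 lam n X Y z y - infl Kx loss l1 l2 lam n X Y z z"
  define sc where "sc = - (1 / N) * (l1 y u - l1 z u)"
  have \<delta>_eq: "\<delta> = sc *\<^sub>R p"
  proof -
    have iw: "infl Kx loss l1 l2 lam n X Y z w = (- (1 / N) * l1 w u) *\<^sub>R p" for w
      by (simp add: infl_def p_def g_def u_def eval_at_def k_def N_def Let_def)
    show ?thesis unfolding \<delta>_def iw sc_def scaleR_left_diff_distrib[symmetric] by (simp add: algebra_simps)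
  qed
  define E where "E = \<Delta> - \<delta>"
  have fIF: "f - f_IF Kx loss l1 l2 lam n X Y z y = E"
    by (simp add: f_IF_def E_def \<Delta>_def \<delta>_def g_def algebra_simps)
  have \<delta>norm: "norm \<delta> \<le> r1 * q (Suc n) / (lam * N)"
  proof -
    have "norm \<delta> = (1 / N) * (2 * r1) * norm p"
      using N0 by (simp add: \<delta>_eq sc_def r1_eq abs_mult)
    also have "\<dots> \<le> (1 / N) * (2 * r1) * (q (Suc n) / (2 * lam))"
      using pnorm N0 r1_0 by (intro mult_left_mono) auto
    also have "\<dots> = r1 * q (Suc n) / (lam * N)" using lam_pos N0 by (simp add: field_simps)
    finally show ?thesis .
  qed
  have Ebnd1: "norm E \<le> 2 * r1 * q (Suc n) / (lam * N)"
  proof -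
    have "norm E \<le> norm \<Delta> + norm \<delta>" unfolding E_def by (rule norm_triangle_ineq4)
    also have "\<dots> \<le> 2 * r1 * q (Suc n) / (lam * N)"
    proof -
      have e: "2 * r1 * q (Suc n) / (lam * N) = r1 * q (Suc n) / (lam * N) + r1 * q (Suc n) / (lam * N)"
        by (simp only: mult_2 distrib_right add_divide_distrib)
      show ?thesis unfolding e by (rule add_mono[OF stab \<delta>norm])
    qed
    finally show ?thesis .
  qed
  define b where "b i = c i * Di i - (\<phi>f i - \<phi>g i) - (if i = Suc n then sc else 0)" for i
  have HE: "H E = (\<Sum>i\<in>I. b i *\<^sub>R k i)"
  proof -
    have HD: "H \<Delta> = (\<Sum>i\<in>I. (c i * Di i) *\<^sub>R k i) + (2 * lam) *\<^sub>R \<Delta>"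
      by (simp add: H_def Hop_def Di_def)
    have D2: "(2 * lam) *\<^sub>R \<Delta> = - (\<Sum>i\<in>I. (\<phi>f i - \<phi>g i) *\<^sub>R k i)"
      using diffeq by (simp add: eq_neg_iff_add_eq_0 add.commute)
    have Hd: "H \<delta> = sc *\<^sub>R k (Suc n)"
      unfolding \<delta>_eq H_def Hop_scale using Hp by (simp add: H_def)
    have HE1: "H E = H \<Delta> - H \<delta>" unfolding E_def H_def by (rule Hop_diff)
    have dl: "(\<Sum>i\<in>I. (if i = Suc n then sc else 0) *\<^sub>R k i) = sc *\<^sub>R k (Suc n)"
    proof -
      have "(\<Sum>i\<in>I. (if i = Suc n then sc else 0) *\<^sub>R k i) = (\<Sum>i\<in>I. (if i = Suc n then sc *\<^sub>R k i else 0))"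
        by (intro sum.cong) auto
      also have "\<dots> = sc *\<^sub>R k (Suc n)" using finI NI by (simp add: sum.delta')
      finally show ?thesis .
    qed
    have "(\<Sum>i\<in>I. b i *\<^sub>R k i) = (\<Sum>i\<in>I. (c i * Di i) *\<^sub>R k i) - (\<Sum>i\<in>I. (\<phi>f i - \<phi>g i) *\<^sub>R k i)
        - (\<Sum>i\<in>I. (if i = Suc n then sc else 0) *\<^sub>R k i)"
      by (simp add: b_def scaleR_left_diff_distrib sum_subtractf)
    then show ?thesis using HE1 HD D2 Hd dl by simp
  qed
  define d where "d = norm \<Delta>"
  have d0: "d \<ge> 0" by (simp add: d_def)
  have bbound: "\<bar>b i\<bar> \<le> (1 / N) * (\<xi> / 2 * (Di i)\<^sup>2 + (if i = Suc n then \<beta> * \<bar>Di i\<bar> else 0))"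
    if i: "i \<in> I" for i
  proof (cases "i = Suc n")
    case True
    define fx where "fx = inner f (k (Suc n))"
    have DN: "Di (Suc n) = fx - u" by (simp add: Di_eq fx_def u_def)
    have bi: "b i = - (1 / N) * ((l1 y fx - l1 y u - l2 y u * (fx - u)) + (l2 y u - l2 z u) * (fx - u))"
      using True by (simp add: b_def c_def \<phi>f_def \<phi>g_def sc_def Yy_N Yz_N DN fx_def u_def algebra_simps)
    have tA: "\<bar>l1 y fx - l1 y u - l2 y u * (fx - u)\<bar> \<le> \<xi> / 2 * (fx - u)\<^sup>2" using tay y_in by blast
    have tB: "\<bar>(l2 y u - l2 z u) * (fx - u)\<bar> \<le> \<beta> * \<bar>fx - u\<bar>"
    proof -
      have "\<bar>l2 y u - l2 z u\<bar> \<le> \<beta>" using l2_nn[OF y_in, of u] l2_nn[OF z_in, of u] l2_le[OF y_in, of u] l2_le[OF z_in, of u]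
        by (simp add: abs_le_iff)
      then show ?thesis by (simp add: abs_mult mult_right_mono)
    qed
    have "\<bar>b i\<bar> = (1 / N) * \<bar>(l1 y fx - l1 y u - l2 y u * (fx - u)) + (l2 y u - l2 z u) * (fx - u)\<bar>"
      unfolding bi using N0 by (simp add: abs_mult)
    also have "\<dots> \<le> (1 / N) * (\<xi> / 2 * (fx - u)\<^sup>2 + \<beta> * \<bar>fx - u\<bar>)"
      using N0 order_trans[OF abs_triangle_ineq add_mono[OF tA tB]] by (intro mult_left_mono) auto
    finally have "\<bar>b i\<bar> \<le> (1 / N) * (\<xi> / 2 * (fx - u)\<^sup>2 + \<beta> * \<bar>fx - u\<bar>)" .
    then show ?thesis using True DN by simp
  next
    case False
    with i have i': "i \<in> {1..n}" by (auto simp: I_def)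
    define T where "T = l1 (Y i) (inner f (k i)) - l1 (Y i) (inner g (k i)) - l2 (Y i) (inner g (k i)) * (inner f (k i) - inner g (k i))"
    have bi: "b i = - (1 / N) * T"
      unfolding T_def using False N0 by (simp add: b_def c_def \<phi>f_def \<phi>g_def YyI[OF i'] Di_eq algebra_simps) (simp add: field_simps)
    have tA: "\<bar>T\<bar> \<le> \<xi> / 2 * (Di i)\<^sup>2" unfolding T_def Di_eq using tay Y_in i' by blast
    have "\<bar>b i\<bar> = (1 / N) * \<bar>T\<bar>" unfolding bi using N0 by (simp add: abs_mult)
    also have "\<dots> \<le> (1 / N) * (\<xi> / 2 * (Di i)\<^sup>2)" using tA N0 by (intro mult_left_mono) auto
    finally show ?thesis using False by simp
  qed
  define S3 where "S3 = (\<Sum>i\<in>I. (q i) ^ 3)"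
  have S30: "S3 \<ge> 0" unfolding S3_def q_def by (intro sum_nonneg) auto
  have HEnorm: "norm (H E) \<le> (1 / N) * (\<xi> / 2 * d\<^sup>2 * S3 + \<beta> * (q (Suc n))\<^sup>2 * d)"
  proof -
    have "norm (H E) \<le> (\<Sum>i\<in>I. norm (b i *\<^sub>R k i))" unfolding HE by (rule norm_sum)
    also have "\<dots> = (\<Sum>i\<in>I. \<bar>b i\<bar> * q i)" by (simp add: q_def)
    also have "\<dots> \<le> (\<Sum>i\<in>I. (1 / N) * (\<xi> / 2 * d\<^sup>2 * (q i) ^ 3 + (if i = Suc n then \<beta> * (q i)\<^sup>2 * d else 0)))"
    proof (rule sum_mono)
      fix i assume i: "i \<in> I"
      have q0: "q i \<ge> 0" by (simp add: q_def)
      have Dsq: "(Di i)\<^sup>2 \<le> (q i * d)\<^sup>2"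
        using power_mono[OF Di_le[of i] abs_ge_zero[of "Di i"], of 2] unfolding d_def power2_abs by simp
      have "\<bar>b i\<bar> * q i \<le> (1 / N) * (\<xi> / 2 * (Di i)\<^sup>2 + (if i = Suc n then \<beta> * \<bar>Di i\<bar> else 0)) * q i"
        using bbound[OF i] q0 by (rule mult_right_mono)
      also have "\<dots> \<le> (1 / N) * (\<xi> / 2 * (q i * d)\<^sup>2 + (if i = Suc n then \<beta> * (q i * d) else 0)) * q i"
        using Dsq Di_le[of i] N0 \<xi>0 \<beta>0 q0
        by (intro mult_right_mono mult_left_mono add_mono) (auto simp: d_def intro: mult_left_mono)
      also have "\<dots> = (1 / N) * (\<xi> / 2 * d\<^sup>2 * (q i) ^ 3 + (if i = Suc n then \<beta> * (q i)\<^sup>2 * d else 0))"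
        by (simp add: power2_eq_square power3_eq_cube algebra_simps)
      finally show "\<bar>b i\<bar> * q i \<le> \<dots>" .
    qed
    also have "\<dots> = (1 / N) * (\<xi> / 2 * d\<^sup>2 * S3 + \<beta> * (q (Suc n))\<^sup>2 * d)"
    proof -
      have "(\<Sum>i\<in>I. (if i = Suc n then \<beta> * (q i)\<^sup>2 * d else 0)) = \<beta> * (q (Suc n))\<^sup>2 * d"
        using finI NI by (simp add: sum.delta')
      moreover have "(\<Sum>i\<in>I. \<xi> / 2 * d\<^sup>2 * (q i) ^ 3) = \<xi> / 2 * d\<^sup>2 * S3"
        by (simp add: S3_def sum_distrib_left)
      moreover have "(\<Sum>i\<in>I. (1 / N) * (\<xi> / 2 * d\<^sup>2 * (q i) ^ 3 + (if i = Suc n then \<beta> * (q i)\<^sup>2 * d else 0)))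
        = (1 / N) * ((\<Sum>i\<in>I. \<xi> / 2 * d\<^sup>2 * (q i) ^ 3) + (\<Sum>i\<in>I. (if i = Suc n then \<beta> * (q i)\<^sup>2 * d else 0)))"
        by (simp only: distrib_left sum_distrib_left sum.distrib)
      ultimately show ?thesis by simp
    qed
    finally show ?thesis .
  qed
  have Ebnd2': "norm E \<le> norm (H E) / (2 * lam)"
    by (rule coerc_bound[OF _ lam_pos]) (rule Hquad)
  define D where "D = r1 * q (Suc n) / (lam * N)"
  have dD: "d \<le> D" using stab by (simp add: d_def D_def)
  have Ebnd2: "norm E \<le> ((1 / N) * (\<xi> / 2 * D\<^sup>2 * S3 + \<beta> * (q (Suc n))\<^sup>2 * D)) / (2 * lam)"
  proof -
    have "d\<^sup>2 \<le> D\<^sup>2" using dD d0 by (simp add: power_mono)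
    then have "(1 / N) * (\<xi> / 2 * d\<^sup>2 * S3 + \<beta> * (q (Suc n))\<^sup>2 * d) \<le> (1 / N) * (\<xi> / 2 * D\<^sup>2 * S3 + \<beta> * (q (Suc n))\<^sup>2 * D)"
      using dD N0 \<xi>0 S30 \<beta>0
      by (intro mult_left_mono add_mono mult_right_mono) auto
    with HEnorm have "norm (H E) \<le> (1 / N) * (\<xi> / 2 * D\<^sup>2 * S3 + \<beta> * (q (Suc n))\<^sup>2 * D)" by (rule order_trans)
    then have "norm (H E) / (2 * lam) \<le> ((1 / N) * (\<xi> / 2 * D\<^sup>2 * S3 + \<beta> * (q (Suc n))\<^sup>2 * D)) / (2 * lam)"
      using lam_pos by (intro divide_right_mono) auto
    then show ?thesis using Ebnd2' by (rule order_trans[rotated])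
  qed
  define Q where "Q = q (Suc n)"
  define R2 where "R2 = rho2 Kx loss l1 \<beta> \<xi> lam n X Y z y"
  define rt where "rt = (1 + Q\<^sup>2 * \<beta> / (lam * N)) * r1"
  have Nn: "real (n + 1) = N" by (simp add: N_def)
  have Q0: "Q \<ge> 0" by (simp add: Q_def q_def)
  have S3eq: "(\<Sum>i = 1..Suc n. kmat Kx X i i powr (3/2)) = S3"
    unfolding S3_def I_def by (intro sum.cong) (auto simp: Kq pow32 q_def)
  have R2_eq: "R2 = \<xi> / 2 * Q * ((1 / N) * S3) * rt\<^sup>2 + 2 * lam * Q\<^sup>2 * \<beta> * rt"
    unfolding R2_def rho2_def rho1t_def Let_def S3eq sqK r1_def[symmetric] Nn
    by (simp add: Kq rt_def Q_def)
  have rt1: "r1 \<le> rt"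
  proof -
    have "0 \<le> Q\<^sup>2 * \<beta> / (lam * N)" using \<beta>0 lam_pos N0 by simp
    then have "0 \<le> (Q\<^sup>2 * \<beta> / (lam * N)) * r1" using r1_0 by (rule mult_nonneg_nonneg)
    then have "r1 \<le> r1 + (Q\<^sup>2 * \<beta> / (lam * N)) * r1" by linarith
    then show ?thesis by (simp add: rt_def algebra_simps)
  qed
  define P1 where "P1 = \<xi> * S3 * Q\<^sup>2 / (4 * lam ^ 3 * N ^ 3)"
  define P2 where "P2 = \<beta> * Q ^ 3 / (2 * lam\<^sup>2 * N\<^sup>2)"
  have P10: "P1 \<ge> 0" unfolding P1_def using \<xi>0 S30 lam_pos N0 by simp
  have P20: "P2 \<ge> 0" unfolding P2_def using \<beta>0 Q0 lam_pos N0 by simp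
  have eq1: "((1 / N) * (\<xi> / 2 * D\<^sup>2 * S3 + \<beta> * (q (Suc n))\<^sup>2 * D)) / (2 * lam) = P1 * r1\<^sup>2 + P2 * r1"
    unfolding D_def P1_def P2_def Q_def[symmetric] by (rule arith_eq1[OF lam_pos N0])
  have eq2: "Q * R2 / (lam ^ 3 * N\<^sup>2) = 2 * P1 * rt\<^sup>2 + 4 * P2 * rt"
    unfolding R2_eq P1_def P2_def by (rule arith_eq2[OF lam_pos N0])
  have Efin: "norm E \<le> Q * R2 / (lam ^ 3 * N\<^sup>2)"
  proof -
    have "r1\<^sup>2 \<le> rt\<^sup>2" using rt1 r1_0 by (simp add: power_mono)
    then have a1: "P1 * r1\<^sup>2 \<le> P1 * rt\<^sup>2" using P10 by (rule mult_left_mono)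
    have a2: "0 \<le> P1 * rt\<^sup>2" using P10 by simp
    have b1: "P2 * r1 \<le> P2 * rt" using P20 rt1 by (intro mult_left_mono)
    have b2: "0 \<le> P2 * rt" using P20 rt1 r1_0 by simp
    have a: "P1 * r1\<^sup>2 \<le> 2 * P1 * rt\<^sup>2" using a1 a2 by linarith
    have b: "P2 * r1 \<le> 4 * P2 * rt" using b1 b2 by linarith
    show ?thesis using Ebnd2 eq1 eq2 a b by linarith
  qed
  have gen: "\<bar>s w (inner f (k i)) - s w (inner (f_IF Kx loss l1 l2 lam n X Y z y) (k i))\<bar>
      \<le> tau2 Kx loss l1 \<beta> \<xi> \<gamma> lam n X Y z i y" if w: "w \<in> \<Y>" for w i
  proof -
    have qi: "q i \<ge> 0" by (simp add: q_def)
    have "dist (s w (inner f (k i))) (s w (inner (f_IF Kx loss l1 l2 lam n X Y z y) (k i)))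
        \<le> \<gamma> * dist (inner f (k i)) (inner (f_IF Kx loss l1 l2 lam n X Y z y) (k i))"
      using lip_s w by (intro lipschitz_onD) auto
    also have "dist (inner f (k i)) (inner (f_IF Kx loss l1 l2 lam n X Y z y) (k i)) = \<bar>inner E (k i)\<bar>"
      using fIF[symmetric] by (simp add: dist_real_def inner_diff_left[symmetric])
    also have "\<bar>inner E (k i)\<bar> \<le> norm E * q i" unfolding q_def by (rule Cauchy_Schwarz_ineq2)
    finally have L: "\<bar>s w (inner f (k i)) - s w (inner (f_IF Kx loss l1 l2 lam n X Y z y) (k i))\<bar> \<le> \<gamma> * (norm E * q i)"
      using \<gamma>0 by (simp add: dist_real_def mult_left_mono)
    have A: "\<gamma> * (norm E * q i) \<le> q i * Q * (\<gamma> * R2 / (lam ^ 3 * N\<^sup>2))"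
    proof -
      have "\<gamma> * (norm E * q i) \<le> \<gamma> * ((Q * R2 / (lam ^ 3 * N\<^sup>2)) * q i)"
        using Efin qi \<gamma>0 by (intro mult_left_mono mult_right_mono) auto
      then show ?thesis by (simp add: mult_ac)
    qed
    have B: "\<gamma> * (norm E * q i) \<le> q i * Q * (2 * \<gamma> * r1 / (lam * N))"
    proof -
      have "\<gamma> * (norm E * q i) \<le> \<gamma> * ((2 * r1 * Q / (lam * N)) * q i)"
        using Ebnd1 qi \<gamma>0 by (intro mult_left_mono mult_right_mono) (auto simp: Q_def)
      then show ?thesis by (simp add: mult_ac)
    qed
    have tau_eq: "tau2 Kx loss l1 \<beta> \<xi> \<gamma> lam n X Y z i y
        = q i * Q * min (\<gamma> * R2 / (lam ^ 3 * N\<^sup>2)) (2 * \<gamma> * r1 / (lam * N))"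
      unfolding tau2_def sqK R2_def[symmetric] r1_def[symmetric] Nn Q_def ..
    show ?thesis unfolding tau_eq using L A B by (cases "\<gamma> * R2 / (lam ^ 3 * N\<^sup>2) \<le> 2 * \<gamma> * r1 / (lam * N)") (auto simp: min_def)
  qed
  show ?thesis
    unfolding eval_at_def f_def[symmetric] k_def[symmetric]
    using gen Y_in y_in by auto
qed


end
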